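(* Let $(f_0, M_0, \Lambda_0, \mathcal{Q}_0)$ be a SIMDG with induced set of distributions $\mathcal{P}_0$, training distribution $P_{\mathrm{tr}}$, function class $\mathcal{F}$, and invariant set $\mathcal{I}_0$ as described in the context, and assume that for all $z\in\mathbb{R}^r$ the point mass $\delta_z$ belongs to $\mathcal{Q}_0$. Define $$\mathcal{H}_1 := \{f\in\mathcal{F} \mid Y - f(X) \text{ is independent of } Z \text{ under } P_{\mathrm{tr}}\}.$$ Then: (1) $\mathcal{I}_0 \subseteq \mathcal{H}_1$. (2) If, in addition, $P \ll P_{\mathrm{tr}}$ for all $P\in\mathcal{P}_0$, then $\mathcal{H}_1 \subseteq \mathcal{I}_0$. (3) Without the absolute continuity assumption in (2), the inclusion $\mathcal{H}_1\subseteq\mathcal{I}_0$ may fail, even when $\mathcal{F}$ satisfies: for all $f,g\in\mathcal{F}$ and all $P\in\mathcal{P}_0$, $f(X)=g(X)$ $P_{\mathrm{tr}}$-a.s. implies $f(X)=g(X)$ $P$-a.s.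
   Context: Fix integers $p,r\ge 1$. A SIMDG (simultaneous equation model for distribution generalization) is a tuple $(f_0, M_0, \Lambda_0, \mathcal{Q}_0)$ where $f_0:\mathbb{R}^p\to\mathbb{R}$ is measurable, $M_0\in\mathbb{R}^{p\times r}$, $\Lambda_0$ is a distribution on $\mathbb{R}^{1+p}$ such that $(U,V)\sim\Lambda_0$ satisfies $\mathrm{E}[(U,V)]=0$ and $\mathrm{E}[\|(U,V)\|_2^2]<\infty$ ($U\in\mathbb{R}$, $V\in\mathbb{R}^p$), and $\mathcal{Q}_0$ is a set of distributions on $\mathbb{R}^r$. For each $Q\in\mathcal{Q}_0$ the model induces a distribution $P$ of $(U,V,X,Y,Z)$ by drawing $((U,V),Z)\sim\Lambda_0\otimes Q$ (so $(U,V)$ is independent of $Z$) and setting $X = M_0 Z + V$, $Y = f_0(X)+U$. $\mathcal{P}_0$ is the set of all distributions so induced by some $Q\in\mathcal{Q}_0$. Standing setting: $\sup_{P\in\mathcal{P}_0}\mathrm{E}_P[f_0(X)]^2<\infty$; $Q_{\mathrm{tr}}\in\mathcal{Q}_0$ satisfies $\mathrm{E}_{Q_{\mathrm{tr}}}[Z]=0$ and $\mathrm{E}_{Q_{\mathrm{tr}}}[ZZ^\top]\succ 0$; $P_{\mathrm{tr}}\in\mathcal{P}_0$ is the distribution induced by $Q_{\mathrm{tr}}$. $\mathcal{F}$ is a class of measurable functions $\mathbb{R}^p\to\mathbb{R}$. For $P\in\mathcal{P}_0$ and $f\in\mathcal{F}$, $P^{Y-f(X)}$ denotes the distribution of $Y-f(X)$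 under $P$. A function $f\in\mathcal{F}$ is invariant if $P_{\mathrm{tr}}^{Y-f(X)} = P^{Y-f(X)}$ for all $P\in\mathcal{P}_0$, and $\mathcal{I}_0$ is the set of invariant functions in $\mathcal{F}$. *)

theory Defs
  imports "HOL-Probability.Probability"
begin

type_synonym ('p,'r) outcome = "real \<times> (real^'p) \<times> (real^'p) \<times> real \<times> (real^'r)"

definition simU :: "('p::finite,'r::finite) outcome \<Rightarrow> real" where
  "simU \<omega> = fst \<omega>"
definition simV :: "('p::finite,'r::finite) outcome \<Rightarrow> real^'p" where
  "simV \<omega> = fst (snd \<omega>)"
definition simX :: "('p::finite,'r::finite) outcome \<Rightarrow> real^'p" where
  "simX \<omega> = fst (snd (snd \<omega>))"
definition simY :: "('p::finite,'r::finite) outcome \<Rightarrow> real" where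
  "simY \<omega> = fst (snd (snd (snd \<omega>)))"
definition simZ :: "('p::finite,'r::finite) outcome \<Rightarrow> real^'r" where
  "simZ \<omega> = snd (snd (snd (snd \<omega>)))"

definition induced ::
  "(real^'p::finite \<Rightarrow> real) \<Rightarrow> real^'r::finite^'p \<Rightarrow> (real \<times> (real^'p)) measure
   \<Rightarrow> (real^'r) measure \<Rightarrow> ('p,'r) outcome measure" where
  "induced f0 M0 \<Lambda>0 Q = distr (\<Lambda>0 \<Otimes>\<^sub>M Q) borel
     (\<lambda>((u,v),z). (u, v, M0 *v z + v, f0 (M0 *v z + v) + u, z))"

definition induced_set ::
  "(real^'p::finite \<Rightarrow> real) \<Rightarrow> real^'r::finite^'p \<Rightarrow> (real \<times> (real^'p)) measure
   \<Rightarrow> (real^'r) measure set \<Rightarrow> ('p,'r) outcome measure set" where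
  "induced_set f0 M0 \<Lambda>0 Q0 = induced f0 M0 \<Lambda>0 ` Q0"

definition resid_distr :: "('p::finite,'r::finite) outcome measure \<Rightarrow> (real^'p \<Rightarrow> real) \<Rightarrow> real measure" where
  "resid_distr P f = distr P borel (\<lambda>\<omega>. simY \<omega> - f (simX \<omega>))"

definition simdg_setting ::
  "(real^'p::finite \<Rightarrow> real) \<Rightarrow> real^'r::finite^'p \<Rightarrow> (real \<times> (real^'p)) measure
   \<Rightarrow> (real^'r) measure set \<Rightarrow> (real^'r) measure \<Rightarrow> (real^'p \<Rightarrow> real) set \<Rightarrow> bool" where
  "simdg_setting f0 M0 \<Lambda>0 Q0 Qtr F \<longleftrightarrow>
     f0 \<in> borel_measurable borel \<and>
     prob_space \<Lambda>0 \<and> sets \<Lambda>0 = sets borel \<and>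
     integrable \<Lambda>0 (\<lambda>w. w) \<and> (\<integral>w. w \<partial>\<Lambda>0) = 0 \<and>
     integrable \<Lambda>0 (\<lambda>w. (norm w)\<^sup>2) \<and>
     (\<forall>Q\<in>Q0. prob_space Q \<and> sets Q = sets borel) \<and>
     (\<exists>C. \<forall>P\<in>induced_set f0 M0 \<Lambda>0 Q0.
          integrable P (\<lambda>\<omega>. (f0 (simX \<omega>))\<^sup>2) \<and> (\<integral>\<omega>. (f0 (simX \<omega>))\<^sup>2 \<partial>P) \<le> C) \<and>
     Qtr \<in> Q0 \<and>
     integrable Qtr (\<lambda>z. z) \<and> (\<integral>z. z \<partial>Qtr) = 0 \<and>
     (\<forall>i j. integrable Qtr (\<lambda>z. z $ i * z $ j)) \<and>
     (\<forall>a::real^'r. a \<noteq> 0 \<longrightarrow>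
        a \<bullet> ((\<chi> i j. \<integral>z. z $ i * z $ j \<partial>Qtr) *v a) > 0) \<and>
     F \<subseteq> borel_measurable borel"

definition invariant_set ::
  "(real^'p::finite \<Rightarrow> real) \<Rightarrow> real^'r::finite^'p \<Rightarrow> (real \<times> (real^'p)) measure
   \<Rightarrow> (real^'r) measure set \<Rightarrow> (real^'r) measure \<Rightarrow> (real^'p \<Rightarrow> real) set \<Rightarrow> (real^'p \<Rightarrow> real) set" where
  "invariant_set f0 M0 \<Lambda>0 Q0 Qtr F =
     {f \<in> F. \<forall>P\<in>induced_set f0 M0 \<Lambda>0 Q0.
        resid_distr (induced f0 M0 \<Lambda>0 Qtr) f = resid_distr P f}"

text \<open>Independence of two Borel random variables with possibly different codomains
  (the right-hand side of the library lemma prob_space.indep_var_eq; the library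
  constant indep_var forces both codomains to have the same type).\<close>
definition indep_rv ::
  "'a measure \<Rightarrow> ('a \<Rightarrow> 'b::topological_space) \<Rightarrow> ('a \<Rightarrow> 'c::topological_space) \<Rightarrow> bool" where
  "indep_rv M X Y \<longleftrightarrow>
     X \<in> measurable M borel \<and> Y \<in> measurable M borel \<and>
     prob_space.indep_set M
       (sigma_sets (space M) {X -` A \<inter> space M | A. A \<in> sets borel})
       (sigma_sets (space M) {Y -` A \<inter> space M | A. A \<in> sets borel})"

definition H1_set ::
  "(real^'p::finite \<Rightarrow> real) \<Rightarrow> real^'r::finite^'p \<Rightarrow> (real \<times> (real^'p)) measure
   \<Rightarrow> (real^'r) measure \<Rightarrow> (real^'p \<Rightarrow> real) set \<Rightarrow> (real^'p \<Rightarrow> real) set" where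
  "H1_set f0 M0 \<Lambda>0 Qtr F =
     {f \<in> F. indep_rv (induced f0 M0 \<Lambda>0 Qtr) (\<lambda>\<omega>. simY \<omega> - f (simX \<omega>)) simZ}"

end

theory Submission
  imports Defs
begin

lemma phi_meas:
  fixes f0 :: "real^'p::finite \<Rightarrow> real" and M0 :: "real^'r::finite^'p"
  assumes "f0 \<in> borel_measurable borel"
  shows "(\<lambda>((u,v),z). (u, v, M0 *v z + v, f0 (M0 *v z + v) + u, z)) \<in> borel_measurable (borel :: ((real \<times> (real^'p)) \<times> (real^'r)) measure)"
proof -
  have c: "(\<lambda>w::((real \<times> (real^'p)) \<times> (real^'r)). M0 *v snd w + snd (fst w)) \<in> borel_measurable borel"
    proof -
    have "continuous_on UNIV (\<lambda>x::((real \<times> (real^'p)) \<times> (real^'r)). M0 *v snd x)"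
      by (rule continuous_on_compose2[OF matrix_vector_mult_linear_continuous_on[of UNIV M0] continuous_on_snd]) auto
    then show ?thesis by (intro borel_measurable_continuous_onI continuous_intros)
  qed
  show ?thesis
    unfolding case_prod_beta
  proof (intro borel_measurable_Pair)
    show "(\<lambda>x::((real \<times> (real^'p)) \<times> (real^'r)). fst (fst x)) \<in> borel_measurable borel"
      "(\<lambda>x::((real \<times> (real^'p)) \<times> (real^'r)). snd (fst x)) \<in> borel_measurable borel"
      "(\<lambda>x::((real \<times> (real^'p)) \<times> (real^'r)). snd x) \<in> borel_measurable borel"
      by (intro borel_measurable_continuous_onI continuous_intros)+
    then show "(\<lambda>x::((real \<times> (real^'p)) \<times> (real^'r)). f0 (M0 *v snd x + snd (fst x)) + fst (fst x)) \<in> borel_measurable borel"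
      using measurable_compose[OF c assms] by (intro borel_measurable_add) auto
  qed (use c in auto)
qed

definition gfun :: "(real^'p::finite \<Rightarrow> real) \<Rightarrow> real^'r::finite^'p \<Rightarrow> (real^'p \<Rightarrow> real)
   \<Rightarrow> (real \<times> (real^'p)) \<times> (real^'r) \<Rightarrow> real" where
  "gfun f0 M0 f w = f0 (M0 *v snd w + snd (fst w)) + fst (fst w) - f (M0 *v snd w + snd (fst w))"

definition hfun :: "(real^'p::finite \<Rightarrow> real) \<Rightarrow> real^'r::finite^'p \<Rightarrow> (real \<times> (real^'p)) measure
   \<Rightarrow> (real^'p \<Rightarrow> real) \<Rightarrow> real set \<Rightarrow> real^'r \<Rightarrow> ennreal" where
  "hfun f0 M0 \<Lambda>0 f A z = emeasure \<Lambda>0 ((\<lambda>x. (x, z)) -` (gfun f0 M0 f -` A))"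

lemma Mv_meas:
  fixes M0 :: "real^'r::finite^'p::finite"
  shows "(\<lambda>w::((real \<times> (real^'p)) \<times> (real^'r)). M0 *v snd w + snd (fst w)) \<in> borel_measurable borel"
proof -
  have "continuous_on UNIV (\<lambda>x::((real \<times> (real^'p)) \<times> (real^'r)). M0 *v snd x)"
    by (rule continuous_on_compose2[OF matrix_vector_mult_linear_continuous_on[of UNIV M0] continuous_on_snd]) auto
  then show ?thesis by (intro borel_measurable_continuous_onI continuous_intros)
qed

lemma gfun_meas:
  assumes "f0 \<in> borel_measurable borel" "f \<in> borel_measurable borel"
  shows "gfun f0 M0 f \<in> borel_measurable borel"
proof -
  have a: "(\<lambda>x::((real \<times> (real^'p)) \<times> (real^'r)). fst (fst x)) \<in> borel_measurable borel"
    by (intro borel_measurable_continuous_onI continuous_intros)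
  show ?thesis unfolding gfun_def
    using measurable_compose[OF Mv_meas assms(1)] measurable_compose[OF Mv_meas assms(2)] a
    by (intro borel_measurable_add borel_measurable_diff) auto
qed

lemma R_meas:
  assumes "f \<in> borel_measurable borel"
  shows "(\<lambda>\<omega>::('p::finite,'r::finite) outcome. simY \<omega> - f (simX \<omega>)) \<in> borel_measurable borel"
proof -
  have "simY \<in> borel_measurable (borel :: ('p,'r) outcome measure)" "simX \<in> borel_measurable (borel :: ('p,'r) outcome measure)"
    unfolding simY_def simX_def by (intro borel_measurable_continuous_onI continuous_intros)+
  then show ?thesis using measurable_compose assms by (intro borel_measurable_diff) auto
qed

lemma Z_meas: "simZ \<in> borel_measurable (borel :: ('p::finite,'r::finite) outcome measure)"
  unfolding simZ_def by (intro borel_measurable_continuous_onI continuous_intros)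

lemma pair_sets:
  assumes "sets \<Lambda>0 = sets (borel :: (real \<times> (real^'p::finite)) measure)" "sets Q = sets (borel :: (real^'r::finite) measure)"
  shows "sets (\<Lambda>0 \<Otimes>\<^sub>M Q) = sets (borel :: ((real \<times> (real^'p)) \<times> (real^'r)) measure)"
  using sets_pair_measure_cong[OF assms] borel_prod by metis

lemma key:
  fixes f0 :: "real^'p::finite \<Rightarrow> real" and M0 :: "real^'r::finite^'p"
  assumes L: "prob_space \<Lambda>0" "sets \<Lambda>0 = sets borel"
    and Q: "prob_space Q" "sets Q = sets borel"
    and f0: "f0 \<in> borel_measurable borel" and f: "f \<in> borel_measurable borel"
    and A: "A \<in> sets borel" and B: "B \<in> sets borel"
  shows "emeasure (induced f0 M0 \<Lambda>0 Q) ((\<lambda>\<omega>. simY \<omega> - f (simX \<omega>)) -` A \<inter> simZ -` B)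
     = (\<integral>\<^sup>+z. indicator B z * hfun f0 M0 \<Lambda>0 f A z \<partial>Q)"
    and "hfun f0 M0 \<Lambda>0 f A \<in> borel_measurable Q"
proof -
  interpret L: prob_space \<Lambda>0 by fact
  interpret Q: prob_space Q by fact
  interpret pair_sigma_finite \<Lambda>0 Q by unfold_locales
  have sp: "space \<Lambda>0 = UNIV" "space Q = UNIV" using sets_eq_imp_space_eq[OF L(2)] sets_eq_imp_space_eq[OF Q(2)] by auto
  have ps: "sets (\<Lambda>0 \<Otimes>\<^sub>M Q) = sets borel" by (rule pair_sets[OF L(2) Q(2)])
  have phi: "(\<lambda>((u,v),z). (u, v, M0 *v z + v, f0 (M0 *v z + v) + u, z)) \<in> measurable (\<Lambda>0 \<Otimes>\<^sub>M Q) (borel :: ('p,'r) outcome measure)"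
    using phi_meas[OF f0, of M0] by (simp add: measurable_cong_sets[OF ps refl])
  have G: "gfun f0 M0 f -` A \<in> sets (\<Lambda>0 \<Otimes>\<^sub>M Q)"
    using measurable_sets[OF gfun_meas[OF f0 f] A] ps by simp
  have S: "(\<lambda>\<omega>. simY \<omega> - f (simX \<omega>)) -` A \<inter> simZ -` B \<in> sets (borel :: ('p,'r) outcome measure)"
    using measurable_sets[OF R_meas[OF f] A] measurable_sets[OF Z_meas B] by auto
  have GB: "gfun f0 M0 f -` A \<inter> snd -` B \<in> sets (\<Lambda>0 \<Otimes>\<^sub>M Q)"
  proof -
    have "snd -` B \<inter> space (\<Lambda>0 \<Otimes>\<^sub>M Q) \<in> sets (\<Lambda>0 \<Otimes>\<^sub>M Q)"
      using B Q(2) by (intro measurable_sets[OF measurable_snd]) simp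
    then show ?thesis using G by (auto simp: space_pair_measure sp)
  qed
  have pre: "(\<lambda>((u,v),z). (u, v, M0 *v z + v, f0 (M0 *v z + v) + u, z)) -` ((\<lambda>\<omega>. simY \<omega> - f (simX \<omega>)) -` A \<inter> simZ -` B) \<inter> space (\<Lambda>0 \<Otimes>\<^sub>M Q)
     = gfun f0 M0 f -` A \<inter> snd -` B"
    by (auto simp: space_pair_measure gfun_def simY_def simX_def simZ_def sp)
  have "emeasure (induced f0 M0 \<Lambda>0 Q) ((\<lambda>\<omega>. simY \<omega> - f (simX \<omega>)) -` A \<inter> simZ -` B)
      = emeasure (\<Lambda>0 \<Otimes>\<^sub>M Q) (gfun f0 M0 f -` A \<inter> snd -` B)"
    unfolding induced_def by (subst emeasure_distr[OF phi S], subst pre, rule refl)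
  also have "\<dots> = (\<integral>\<^sup>+y. emeasure \<Lambda>0 ((\<lambda>x. (x, y)) -` (gfun f0 M0 f -` A \<inter> snd -` B)) \<partial>Q)"
    by (rule emeasure_pair_measure_alt2[OF GB])
  also have "\<dots> = (\<integral>\<^sup>+z. indicator B z * hfun f0 M0 \<Lambda>0 f A z \<partial>Q)"
  proof (intro nn_integral_cong)
    fix y
    have "(\<lambda>x. (x, y)) -` (gfun f0 M0 f -` A \<inter> snd -` B) = (if y \<in> B then (\<lambda>x. (x, y)) -` gfun f0 M0 f -` A else {})"
      by auto
    then show "emeasure \<Lambda>0 ((\<lambda>x. (x, y)) -` (gfun f0 M0 f -` A \<inter> snd -` B)) = indicator B y * hfun f0 M0 \<Lambda>0 f A y"
      by (simp add: hfun_def indicator_def)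
  qed
  finally show "emeasure (induced f0 M0 \<Lambda>0 Q) ((\<lambda>\<omega>. simY \<omega> - f (simX \<omega>)) -` A \<inter> simZ -` B)
     = (\<integral>\<^sup>+z. indicator B z * hfun f0 M0 \<Lambda>0 f A z \<partial>Q)" .
  show "hfun f0 M0 \<Lambda>0 f A \<in> borel_measurable Q"
    unfolding hfun_def by (rule measurable_emeasure_Pair2[OF G])
qed

lemma Int_stable_pre: "Int_stable {X -` A \<inter> space M | A. A \<in> sets borel}"
  unfolding Int_stable_def
proof (intro ballI)
  fix a b assume "a \<in> {X -` A \<inter> space M | A. A \<in> sets borel}" "b \<in> {X -` A \<inter> space M | A. A \<in> sets borel}"
  then obtain A B where "A \<in> sets borel" "B \<in> sets borel" "a = X -` A \<inter> space M" "b = X -` B \<inter> space M" by auto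
  then show "a \<inter> b \<in> {X -` A \<inter> space M | A. A \<in> sets borel}"
    by (intro CollectI exI[of _ "A \<inter> B"]) auto
qed

lemma indep_rv_iff:
  fixes X :: "'a \<Rightarrow> 'b::topological_space" and Y :: "'a \<Rightarrow> 'c::topological_space"
  assumes P: "prob_space M" and X: "X \<in> borel_measurable M" and Y: "Y \<in> borel_measurable M"
  shows "indep_rv M X Y \<longleftrightarrow> (\<forall>A\<in>sets borel. \<forall>B\<in>sets borel.
     measure M (X -` A \<inter> Y -` B \<inter> space M) = measure M (X -` A \<inter> space M) * measure M (Y -` B \<inter> space M))"
proof -
  interpret prob_space M by fact
  let ?G1 = "{X -` A \<inter> space M | A. A \<in> sets borel}"
  let ?G2 = "{Y -` A \<inter> space M | A. A \<in> sets borel}"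
  have e1: "?G1 \<subseteq> events" using X by (auto intro: measurable_sets)
  have e2: "?G2 \<subseteq> events" using Y by (auto intro: measurable_sets)
  have iff: "indep_set (sigma_sets (space M) ?G1) (sigma_sets (space M) ?G2) \<longleftrightarrow> indep_set ?G1 ?G2"
  proof
    assume "indep_set (sigma_sets (space M) ?G1) (sigma_sets (space M) ?G2)"
    then show "indep_set ?G1 ?G2"
      by (rule indep_setI[OF e1 e2, OF indep_setD]) (auto intro: sigma_sets.Basic)
  next
    assume "indep_set ?G1 ?G2"
    then have "indep_sets (case_bool ?G1 ?G2) UNIV" unfolding indep_set_def .
    then have "indep_sets (\<lambda>i. sigma_sets (space M) (case_bool ?G1 ?G2 i)) UNIV"
      by (rule indep_sets_sigma) (auto split: bool.split intro: Int_stable_pre)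
    moreover have "(\<lambda>i. sigma_sets (space M) (case_bool ?G1 ?G2 i)) = case_bool (sigma_sets (space M) ?G1) (sigma_sets (space M) ?G2)"
      by (rule ext) (auto split: bool.split)
    ultimately show "indep_set (sigma_sets (space M) ?G1) (sigma_sets (space M) ?G2)"
      unfolding indep_set_def by simp
  qed
  have "indep_set ?G1 ?G2 \<longleftrightarrow> (\<forall>A\<in>sets borel. \<forall>B\<in>sets borel.
     measure M (X -` A \<inter> Y -` B \<inter> space M) = measure M (X -` A \<inter> space M) * measure M (Y -` B \<inter> space M))"
  proof
    assume I: "indep_set ?G1 ?G2"
    show "\<forall>A\<in>sets borel. \<forall>B\<in>sets borel.
     measure M (X -` A \<inter> Y -` B \<inter> space M) = measure M (X -` A \<inter> space M) * measure M (Y -` B \<inter> space M)"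
    proof (intro ballI)
      fix A :: "'b set" and B :: "'c set" assume "A \<in> sets borel" "B \<in> sets borel"
      then have "measure M ((X -` A \<inter> space M) \<inter> (Y -` B \<inter> space M)) = measure M (X -` A \<inter> space M) * measure M (Y -` B \<inter> space M)"
        by (intro indep_setD[OF I]) auto
      moreover have "(X -` A \<inter> space M) \<inter> (Y -` B \<inter> space M) = X -` A \<inter> Y -` B \<inter> space M" by auto
      ultimately show "measure M (X -` A \<inter> Y -` B \<inter> space M) = measure M (X -` A \<inter> space M) * measure M (Y -` B \<inter> space M)"
        by simp
    qed
  next
    assume H: "\<forall>A\<in>sets borel. \<forall>B\<in>sets borel.
     measure M (X -` A \<inter> Y -` B \<inter> space M) = measure M (X -` A \<inter> space M) * measure M (Y -` B \<inter> space M)"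
    show "indep_set ?G1 ?G2"
    proof (rule indep_setI[OF e1 e2])
      fix a b assume "a \<in> ?G1" "b \<in> ?G2"
      then obtain A :: "'b set" and B :: "'c set" where AB: "A \<in> sets borel" "B \<in> sets borel" "a = X -` A \<inter> space M" "b = Y -` B \<inter> space M" by auto
      have "a \<inter> b = X -` A \<inter> Y -` B \<inter> space M" using AB by auto
      then show "prob (a \<inter> b) = prob a * prob b" using H AB by simp
    qed
  qed
  then show ?thesis unfolding indep_rv_def using iff X Y by simp
qed

lemma induced_basic:
  fixes f0 :: "real^'p::finite \<Rightarrow> real" and M0 :: "real^'r::finite^'p"
  assumes L: "prob_space \<Lambda>0" "sets \<Lambda>0 = sets borel"
    and Q: "prob_space Q" "sets Q = sets borel"
    and f0: "f0 \<in> borel_measurable borel"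
  shows "prob_space (induced f0 M0 \<Lambda>0 Q)" "sets (induced f0 M0 \<Lambda>0 Q) = sets borel"
    "space (induced f0 M0 \<Lambda>0 Q) = UNIV"
proof -
  interpret L: prob_space \<Lambda>0 by fact
  interpret Q: prob_space Q by fact
  interpret pair_prob_space \<Lambda>0 Q by unfold_locales
  have ps: "sets (\<Lambda>0 \<Otimes>\<^sub>M Q) = sets borel" by (rule pair_sets[OF L(2) Q(2)])
  have phi: "(\<lambda>((u,v),z). (u, v, M0 *v z + v, f0 (M0 *v z + v) + u, z)) \<in> measurable (\<Lambda>0 \<Otimes>\<^sub>M Q) (borel :: ('p,'r) outcome measure)"
    using phi_meas[OF f0, of M0] by (simp add: measurable_cong_sets[OF ps refl])
  show "prob_space (induced f0 M0 \<Lambda>0 Q)" unfolding induced_def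
    by (rule prob_space_distr[OF phi])
  show "sets (induced f0 M0 \<Lambda>0 Q) = sets borel" unfolding induced_def by simp
  show "space (induced f0 M0 \<Lambda>0 Q) = UNIV" unfolding induced_def by simp
qed

lemma induced_resid:
  fixes f0 :: "real^'p::finite \<Rightarrow> real" and M0 :: "real^'r::finite^'p"
  assumes L: "prob_space \<Lambda>0" "sets \<Lambda>0 = sets borel"
    and Q: "prob_space Q" "sets Q = sets borel"
    and f0: "f0 \<in> borel_measurable borel" and f: "f \<in> borel_measurable borel"
    and A: "A \<in> sets borel"
  shows "emeasure (resid_distr (induced f0 M0 \<Lambda>0 Q) f) A = (\<integral>\<^sup>+z. hfun f0 M0 \<Lambda>0 f A z \<partial>Q)"
    "emeasure (resid_distr (induced f0 M0 \<Lambda>0 Q) f) A = emeasure (induced f0 M0 \<Lambda>0 Q) ((\<lambda>\<omega>. simY \<omega> - f (simX \<omega>)) -` A)"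
proof -
  note b = induced_basic[OF L Q f0, of M0]
  have R: "(\<lambda>\<omega>. simY \<omega> - f (simX \<omega>)) \<in> measurable (induced f0 M0 \<Lambda>0 Q) borel"
    using R_meas[OF f] by (simp add: measurable_cong_sets[OF b(2) refl])
  show e: "emeasure (resid_distr (induced f0 M0 \<Lambda>0 Q) f) A = emeasure (induced f0 M0 \<Lambda>0 Q) ((\<lambda>\<omega>. simY \<omega> - f (simX \<omega>)) -` A)"
    unfolding resid_distr_def using emeasure_distr[OF R A] b(3) by simp
  have "(\<lambda>\<omega>. simY \<omega> - f (simX \<omega>)) -` A = (\<lambda>\<omega>. simY \<omega> - f (simX \<omega>)) -` A \<inter> simZ -` UNIV" by simp
  then show "emeasure (resid_distr (induced f0 M0 \<Lambda>0 Q) f) A = (\<integral>\<^sup>+z. hfun f0 M0 \<Lambda>0 f A z \<partial>Q)"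
    using e key(1)[OF L Q f0 f A, of UNIV M0] by simp
qed

lemma induced_Z:
  fixes f0 :: "real^'p::finite \<Rightarrow> real" and M0 :: "real^'r::finite^'p"
  assumes L: "prob_space \<Lambda>0" "sets \<Lambda>0 = sets borel"
    and Q: "prob_space Q" "sets Q = sets borel"
    and f0: "f0 \<in> borel_measurable borel"
    and B: "B \<in> sets borel"
  shows "emeasure (induced f0 M0 \<Lambda>0 Q) (simZ -` B) = emeasure Q B"
proof -
  interpret L: prob_space \<Lambda>0 by fact
  have sp: "space \<Lambda>0 = UNIV" using sets_eq_imp_space_eq[OF L(2)] by auto
  have "(\<lambda>\<omega>::('p,'r) outcome. simY \<omega> - (\<lambda>_. 0) (simX \<omega>)) -` UNIV \<inter> simZ -` B = simZ -` B" by simp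
  moreover have "\<And>z. hfun f0 M0 \<Lambda>0 (\<lambda>_. 0) UNIV z = 1"
    unfolding hfun_def using L.emeasure_space_1 sp by simp
  moreover have "B \<in> sets Q" using B Q(2) by simp
  moreover have "emeasure (induced f0 M0 \<Lambda>0 Q) ((\<lambda>\<omega>::('p,'r) outcome. simY \<omega> - (\<lambda>_. 0) (simX \<omega>)) -` UNIV \<inter> simZ -` B)
    = (\<integral>\<^sup>+z. indicator B z * hfun f0 M0 \<Lambda>0 (\<lambda>_. 0) UNIV z \<partial>Q)"
    by (rule key(1)[OF L Q f0]) (auto simp: B)
  ultimately show ?thesis by (simp add: nn_integral_indicator)
qed

lemma part1:
  fixes f0 :: "real^'p::finite \<Rightarrow> real" and M0 :: "real^'r::finite^'p"
  assumes setting: "simdg_setting f0 M0 \<Lambda>0 Q0 Qtr F"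
    and dirac: "\<forall>z. return borel z \<in> Q0"
  shows "invariant_set f0 M0 \<Lambda>0 Q0 Qtr F \<subseteq> H1_set f0 M0 \<Lambda>0 Qtr F"
proof
  fix f assume fI: "f \<in> invariant_set f0 M0 \<Lambda>0 Q0 Qtr F"
  have L: "prob_space \<Lambda>0" "sets \<Lambda>0 = sets borel" and f0: "f0 \<in> borel_measurable borel"
    and Qtr: "prob_space Qtr" "sets Qtr = sets borel"
    using setting unfolding simdg_setting_def by auto
  have fF: "f \<in> F" and f: "f \<in> borel_measurable borel"
    using fI setting unfolding invariant_set_def simdg_setting_def by auto
  have ret: "prob_space (return borel z)" "sets (return borel z) = sets borel" for z :: "real^'r"
    by (auto intro: prob_space_return)
  let ?Ptr = "induced f0 M0 \<Lambda>0 Qtr"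
  let ?R = "\<lambda>\<omega>::('p,'r) outcome. simY \<omega> - f (simX \<omega>)"
  note b = induced_basic[OF L Qtr f0, of M0]
  interpret Qtr: prob_space Qtr by fact
  interpret Ptr: prob_space ?Ptr by (rule b(1))
  have hc: "hfun f0 M0 \<Lambda>0 f A z = emeasure (resid_distr ?Ptr f) A" if A: "A \<in> sets borel" for A z
  proof -
    have "induced f0 M0 \<Lambda>0 (return borel z) \<in> induced_set f0 M0 \<Lambda>0 Q0"
      unfolding induced_set_def using dirac by auto
    then have "emeasure (resid_distr ?Ptr f) A = emeasure (resid_distr (induced f0 M0 \<Lambda>0 (return borel z)) f) A"
      using fI unfolding invariant_set_def by auto
    also have "\<dots> = (\<integral>\<^sup>+y. hfun f0 M0 \<Lambda>0 f A y \<partial>return borel z)"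
      by (rule induced_resid(1)[OF L ret f0 f A])
    also have "\<dots> = hfun f0 M0 \<Lambda>0 f A z"
    proof (rule nn_integral_return)
      have "hfun f0 M0 \<Lambda>0 f A \<in> borel_measurable Qtr"
        by (rule key(2)[OF L Qtr f0 f A, of UNIV]) simp
      then show "hfun f0 M0 \<Lambda>0 f A \<in> borel_measurable borel"
        by (simp add: measurable_cong_sets[OF Qtr(2) refl])
    qed simp
    finally show ?thesis by simp
  qed
  have "indep_rv ?Ptr ?R simZ"
  proof (subst indep_rv_iff[OF b(1)])
    show "?R \<in> borel_measurable ?Ptr" using R_meas[OF f] by (simp add: measurable_cong_sets[OF b(2) refl])
    show "simZ \<in> borel_measurable ?Ptr" using Z_meas by (simp add: measurable_cong_sets[OF b(2) refl])
    show "\<forall>A\<in>sets borel. \<forall>B\<in>sets borel. measure ?Ptr (?R -` A \<inter> simZ -` B \<inter> space ?Ptr) =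
          measure ?Ptr (?R -` A \<inter> space ?Ptr) * measure ?Ptr (simZ -` B \<inter> space ?Ptr)"
    proof (intro ballI)
      fix A :: "real set" and B :: "(real^'r) set" assume A: "A \<in> sets borel" and B: "B \<in> sets borel"
      let ?c = "emeasure (resid_distr ?Ptr f) A"
      have "emeasure ?Ptr (?R -` A \<inter> simZ -` B) = (\<integral>\<^sup>+z. indicator B z * hfun f0 M0 \<Lambda>0 f A z \<partial>Qtr)"
        by (rule key(1)[OF L Qtr f0 f A B])
      also have "\<dots> = (\<integral>\<^sup>+z. ?c * indicator B z \<partial>Qtr)"
        using hc[OF A] by (simp add: mult.commute)
      also have "\<dots> = ?c * emeasure Qtr B"
        using B Qtr(2) by (simp add: nn_integral_cmult_indicator)
      finally have e1: "emeasure ?Ptr (?R -` A \<inter> simZ -` B) = ?c * emeasure Qtr B" .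
      have e2: "emeasure ?Ptr (?R -` A) = ?c" using induced_resid(2)[OF L Qtr f0 f A] by simp
      have e3: "emeasure ?Ptr (simZ -` B) = emeasure Qtr B" by (rule induced_Z[OF L Qtr f0 B])
      show "measure ?Ptr (?R -` A \<inter> simZ -` B \<inter> space ?Ptr) =
          measure ?Ptr (?R -` A \<inter> space ?Ptr) * measure ?Ptr (simZ -` B \<inter> space ?Ptr)"
        using e1 e2 e3 b(3) by (simp add: measure_def enn2real_mult)
    qed
  qed
  then show "f \<in> H1_set f0 M0 \<Lambda>0 Qtr F" unfolding H1_set_def using fF by simp
qed

lemma part2:
  fixes f0 :: "real^'p::finite \<Rightarrow> real" and M0 :: "real^'r::finite^'p"
  assumes setting: "simdg_setting f0 M0 \<Lambda>0 Q0 Qtr F"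
    and ac: "\<forall>P\<in>induced_set f0 M0 \<Lambda>0 Q0. absolutely_continuous (induced f0 M0 \<Lambda>0 Qtr) P"
  shows "H1_set f0 M0 \<Lambda>0 Qtr F \<subseteq> invariant_set f0 M0 \<Lambda>0 Q0 Qtr F"
proof
  fix f assume fH: "f \<in> H1_set f0 M0 \<Lambda>0 Qtr F"
  have L: "prob_space \<Lambda>0" "sets \<Lambda>0 = sets borel" and f0: "f0 \<in> borel_measurable borel"
    and Qtr: "prob_space Qtr" "sets Qtr = sets borel"
    and Q0: "\<And>Q. Q \<in> Q0 \<Longrightarrow> prob_space Q \<and> sets Q = sets borel"
    using setting unfolding simdg_setting_def by auto
  have fF: "f \<in> F" and f: "f \<in> borel_measurable borel"
    using fH setting unfolding H1_set_def simdg_setting_def by auto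
  let ?Ptr = "induced f0 M0 \<Lambda>0 Qtr"
  let ?R = "\<lambda>\<omega>::('p,'r) outcome. simY \<omega> - f (simX \<omega>)"
  note b = induced_basic[OF L Qtr f0, of M0]
  interpret Qtr: prob_space Qtr by fact
  interpret Ptr: prob_space ?Ptr by (rule b(1))
  have Rm: "?R \<in> borel_measurable ?Ptr" using R_meas[OF f] by (simp add: measurable_cong_sets[OF b(2) refl])
  have Zm: "simZ \<in> borel_measurable ?Ptr" using Z_meas by (simp add: measurable_cong_sets[OF b(2) refl])
  have ind: "indep_rv ?Ptr ?R simZ" using fH unfolding H1_set_def by simp
  have indeq: "measure ?Ptr (?R -` A \<inter> simZ -` B) = measure ?Ptr (?R -` A) * measure ?Ptr (simZ -` B)"
    if "A \<in> sets borel" "B \<in> sets borel" for A B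
    using ind[unfolded indep_rv_iff[OF b(1) Rm Zm]] that b(3) by simp
  have main: "emeasure (resid_distr (induced f0 M0 \<Lambda>0 Q) f) A = emeasure (resid_distr ?Ptr f) A"
    if Q: "Q \<in> Q0" and A: "A \<in> sets borel" for Q A
  proof -
    have Qp: "prob_space Q" "sets Q = sets borel" using Q0[OF Q] by auto
    interpret Q: prob_space Q by (rule Qp(1))
    let ?P = "induced f0 M0 \<Lambda>0 Q"
    let ?c = "emeasure (resid_distr ?Ptr f) A"
    let ?h = "hfun f0 M0 \<Lambda>0 f A"
    have hm: "?h \<in> borel_measurable Qtr" by (rule key(2)[OF L Qtr f0 f A, of UNIV]) simp
    have hmQ: "?h \<in> borel_measurable Q" by (rule key(2)[OF L Qp f0 f A, of UNIV]) simp
    have c_eq: "?c = emeasure ?Ptr (?R -` A)" using induced_resid(2)[OF L Qtr f0 f A] by simp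
    have dens: "(\<integral>\<^sup>+ z. ?h z * indicator B z \<partial>Qtr) = (\<integral>\<^sup>+ z. ?c * indicator B z \<partial>Qtr)"
      if B: "B \<in> sets Qtr" for B
    proof -
      have B': "B \<in> sets borel" using B Qtr(2) by simp
      have "(\<integral>\<^sup>+ z. ?h z * indicator B z \<partial>Qtr) = (\<integral>\<^sup>+ z. indicator B z * ?h z \<partial>Qtr)"
        by (simp add: mult.commute)
      also have "\<dots> = emeasure ?Ptr (?R -` A \<inter> simZ -` B)"
        by (rule key(1)[OF L Qtr f0 f A B', symmetric])
      also have "\<dots> = ennreal (measure ?Ptr (?R -` A) * measure ?Ptr (simZ -` B))"
        using indeq[OF A B'] by (simp add: Ptr.emeasure_eq_measure)
      also have "\<dots> = emeasure ?Ptr (?R -` A) * emeasure ?Ptr (simZ -` B)"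
        by (simp add: Ptr.emeasure_eq_measure ennreal_mult)
      also have "\<dots> = ?c * emeasure Qtr B"
        using c_eq induced_Z[OF L Qtr f0 B'] by simp
      also have "\<dots> = (\<integral>\<^sup>+ z. ?c * indicator B z \<partial>Qtr)"
        using B by (simp add: nn_integral_cmult_indicator)
      finally show ?thesis .
    qed
    have AEtr: "AE z in Qtr. ?h z = ?c"
      by (rule Qtr.density_unique2[OF hm _ dens]) simp
    let ?N = "{z. ?h z \<noteq> ?c}"
    have spQ: "space Qtr = UNIV" "space Q = UNIV" using sets_eq_imp_space_eq[OF Qtr(2)] sets_eq_imp_space_eq[OF Qp(2)] by auto
    have Nm: "?N \<in> sets borel"
    proof -
      have "{z \<in> space Qtr. ?h z \<noteq> ?c} \<in> sets Qtr" using hm by measurable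
      then show ?thesis using spQ Qtr(2) by simp
    qed
    have "emeasure Qtr ?N = 0"
      using AEtr Nm Qtr(2) spQ by (subst (asm) AE_iff_measurable[of ?N]) auto
    then have "emeasure ?Ptr (simZ -` ?N) = 0" using induced_Z[OF L Qtr f0 Nm] by simp
    moreover have "simZ -` ?N \<in> sets ?Ptr" using measurable_sets[OF Zm, of ?N] Nm b(3) by simp
    ultimately have "simZ -` ?N \<in> null_sets ?Ptr" by (intro null_setsI)
    moreover have "?P \<in> induced_set f0 M0 \<Lambda>0 Q0" unfolding induced_set_def using Q by auto
    ultimately have "simZ -` ?N \<in> null_sets ?P" using ac unfolding absolutely_continuous_def by auto
    then have "emeasure Q ?N = 0" by (metis induced_Z[OF L Qp f0 Nm, of M0] null_setsD1)
    then have AEQ: "AE z in Q. ?h z = ?c"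
      using Nm Qp(2) spQ by (subst AE_iff_measurable[of ?N]) auto
    have "emeasure (resid_distr ?P f) A = (\<integral>\<^sup>+z. ?h z \<partial>Q)" by (rule induced_resid(1)[OF L Qp f0 f A])
    also have "\<dots> = (\<integral>\<^sup>+z. ?c \<partial>Q)" by (rule nn_integral_cong_AE[OF AEQ])
    also have "\<dots> = ?c" by (simp add: Q.emeasure_space_1)
    finally show ?thesis .
  qed
  show "f \<in> invariant_set f0 M0 \<Lambda>0 Q0 Qtr F"
    unfolding invariant_set_def
  proof (intro CollectI conjI ballI fF)
    fix P assume "P \<in> induced_set f0 M0 \<Lambda>0 Q0"
    then obtain Q where Q: "Q \<in> Q0" and P: "P = induced f0 M0 \<Lambda>0 Q" unfolding induced_set_def by auto
    show "resid_distr ?Ptr f = resid_distr P f"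
      unfolding P
    proof (rule measure_eqI)
      show "sets (resid_distr ?Ptr f) = sets (resid_distr (induced f0 M0 \<Lambda>0 Q) f)"
        by (simp add: resid_distr_def)
      fix A assume "A \<in> sets (resid_distr ?Ptr f)"
      then have "A \<in> sets borel" by (simp add: resid_distr_def)
      then show "emeasure (resid_distr ?Ptr f) A = emeasure (resid_distr (induced f0 M0 \<Lambda>0 Q) f) A"
        using main[OF Q] by simp
    qed
  qed
qed


definition sv :: "'r::finite \<times> bool \<Rightarrow> real^'r" where
  "sv a = axis (fst a) (if snd a then 1 else -1)"

definition Qc :: "(real^'r::finite) measure" where
  "Qc = distr (measure_pmf (pmf_of_set UNIV)) borel sv"

lemma card_rb: "card (UNIV :: ('r::finite \<times> bool) set) = 2 * CARD('r)"
  by (simp add: card_UNIV_bool)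

lemma Qc_basic: "prob_space (Qc :: (real^'r::finite) measure)" "sets (Qc :: (real^'r::finite) measure) = sets borel"
  unfolding Qc_def by (auto intro!: measure_pmf.prob_space_distr)

lemma Qc_int:
  fixes g :: "real^'r::finite \<Rightarrow> 'b::{banach, second_countable_topology}"
  assumes g: "g \<in> borel_measurable borel"
  shows "integrable Qc g" "integral\<^sup>L Qc g = (\<Sum>a\<in>UNIV. (1 / real (2 * CARD('r))) *\<^sub>R g (sv a))"
proof -
  have m: "sv \<in> measurable (measure_pmf (pmf_of_set (UNIV :: ('r \<times> bool) set))) borel" by simp
  show "integrable Qc g" unfolding Qc_def
    by (subst integrable_distr_eq[OF m g]) (rule integrable_measure_pmf_finite, simp)
  have "integral\<^sup>L Qc g = (LINT x|measure_pmf (pmf_of_set (UNIV :: ('r \<times> bool) set)). g (sv x))"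
    unfolding Qc_def by (rule integral_distr[OF m g])
  also have "\<dots> = (\<Sum>a\<in>UNIV. pmf (pmf_of_set (UNIV :: ('r \<times> bool) set)) a *\<^sub>R g (sv a))"
    by (rule integral_measure_pmf) auto
  also have "\<dots> = (\<Sum>a\<in>UNIV. (1 / real (2 * CARD('r))) *\<^sub>R g (sv a))"
    by (simp add: card_rb mult.commute)
  finally show "integral\<^sup>L Qc g = (\<Sum>a\<in>UNIV. (1 / real (2 * CARD('r))) *\<^sub>R g (sv a))" .
qed

lemma sum_rb: "(\<Sum>a\<in>(UNIV :: ('r::finite \<times> bool) set). h a) = (\<Sum>i\<in>UNIV. h (i, True) + h (i, False))"
proof -
  have "(\<Sum>a\<in>(UNIV :: ('r \<times> bool) set). h a) = (\<Sum>i\<in>UNIV. \<Sum>b\<in>UNIV. h (i, b))"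
    by (simp add: sum.cartesian_product UNIV_Times_UNIV[symmetric] del: UNIV_Times_UNIV)
  then show ?thesis by (simp add: UNIV_bool add.commute)
qed

lemma Qc_mean: "integral\<^sup>L (Qc :: (real^'r::finite) measure) (\<lambda>z. z) = 0"
proof -
  have "\<And>i::'r. sv (i, True) + sv (i, False) = 0"
    by (simp add: sv_def vec_eq_iff axis_def)
  then show ?thesis
    by (subst Qc_int(2)) (auto simp: sum_rb scaleR_add_right[symmetric] simp del: scaleR_add_right)
qed

lemma Qc_cov: "integral\<^sup>L (Qc :: (real^'r::finite) measure) (\<lambda>z. z $ i * z $ j) = (if i = j then 1 / real CARD('r) else 0)"
proof -
  have m: "(\<lambda>z::real^'r. z $ i * z $ j) \<in> borel_measurable borel" by measurable
  have e: "\<And>k. sv (k, True) $ i * sv (k, True) $ j + sv (k, False) $ i * sv (k, False) $ j = (if k = i \<and> k = j then 2 else 0)"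
    by (simp add: sv_def axis_def)
  have "integral\<^sup>L (Qc :: (real^'r::finite) measure) (\<lambda>z. z $ i * z $ j)
     = (1 / real (2 * CARD('r))) * (\<Sum>k\<in>UNIV. (if k = i \<and> k = j then 2 else 0))"
  proof -
    have "integral\<^sup>L (Qc :: (real^'r::finite) measure) (\<lambda>z. z $ i * z $ j)
       = (\<Sum>a\<in>UNIV. (1 / real (2 * CARD('r))) * (sv a $ i * sv a $ j))"
      by (subst Qc_int(2)[OF m]) simp
    also have "\<dots> = (1 / real (2 * CARD('r))) * (\<Sum>a\<in>UNIV. sv a $ i * sv a $ j)"
      by (rule sum_distrib_left[symmetric])
    also have "(\<Sum>a\<in>UNIV. sv a $ i * sv a $ j) = (\<Sum>k\<in>UNIV. (if k = i \<and> k = j then 2 else 0))"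
      by (subst sum_rb) (simp only: e)
    finally show ?thesis .
  qed
  also have "\<dots> = (if i = j then 1 / real CARD('r) else 0)"
  proof (cases "i = j")
    case False
    then have "\<And>k. (if k = i \<and> k = j then (2::real) else 0) = 0" by auto
    then show ?thesis using False by simp
  qed simp
  finally show ?thesis .
qed

lemma integrable_return':
  fixes f :: "'a \<Rightarrow> 'b::{banach, second_countable_topology}"
  assumes "x \<in> space M" "f \<in> borel_measurable M"
  shows "integrable (return M x) f"
proof (rule integrableI_bounded)
  show "f \<in> borel_measurable (return M x)" using assms(2) by simp
  have "(\<integral>\<^sup>+ a. ennreal (norm (f a)) \<partial>return M x) = ennreal (norm (f x))"
    by (rule nn_integral_return[OF assms(1)]) (use assms(2) in measurable)
  then show "(\<integral>\<^sup>+ a. ennreal (norm (f a)) \<partial>return M x) < \<infinity>" by simp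
qed

lemma indep_from_AE:
  fixes f0 :: "real^'p::finite \<Rightarrow> real" and M0 :: "real^'r::finite^'p"
  assumes L: "prob_space \<Lambda>0" "sets \<Lambda>0 = sets borel"
    and Q: "prob_space Q" "sets Q = sets borel"
    and f0: "f0 \<in> borel_measurable borel" and f: "f \<in> borel_measurable borel"
    and AEc: "\<And>A. A \<in> sets borel \<Longrightarrow> AE z in Q. hfun f0 M0 \<Lambda>0 f A z = c A"
  shows "indep_rv (induced f0 M0 \<Lambda>0 Q) (\<lambda>\<omega>. simY \<omega> - f (simX \<omega>)) simZ"
proof -
  let ?P = "induced f0 M0 \<Lambda>0 Q"
  let ?R = "\<lambda>\<omega>::('p,'r) outcome. simY \<omega> - f (simX \<omega>)"
  note b = induced_basic[OF L Q f0, of M0]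
  interpret Q: prob_space Q by fact
  have e: "emeasure ?P (?R -` A \<inter> simZ -` B) = c A * emeasure Q B"
    if A: "A \<in> sets borel" and B: "B \<in> sets borel" for A B
  proof -
    have "emeasure ?P (?R -` A \<inter> simZ -` B) = (\<integral>\<^sup>+z. indicator B z * hfun f0 M0 \<Lambda>0 f A z \<partial>Q)"
      by (rule key(1)[OF L Q f0 f A B])
    also have "\<dots> = (\<integral>\<^sup>+z. c A * indicator B z \<partial>Q)"
      by (rule nn_integral_cong_AE) (use AEc[OF A] in \<open>auto simp: mult.commute\<close>)
    also have "\<dots> = c A * emeasure Q B"
      using B Q(2) by (simp add: nn_integral_cmult_indicator)
    finally show ?thesis .
  qed
  show ?thesis
  proof (subst indep_rv_iff[OF b(1)])
    show "?R \<in> borel_measurable ?P" using R_meas[OF f] by (simp add: measurable_cong_sets[OF b(2) refl])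
    show "simZ \<in> borel_measurable ?P" using Z_meas by (simp add: measurable_cong_sets[OF b(2) refl])
    show "\<forall>A\<in>sets borel. \<forall>B\<in>sets borel. measure ?P (?R -` A \<inter> simZ -` B \<inter> space ?P) =
          measure ?P (?R -` A \<inter> space ?P) * measure ?P (simZ -` B \<inter> space ?P)"
    proof (intro ballI)
      fix A :: "real set" and B :: "(real^'r) set" assume A: "A \<in> sets borel" and B: "B \<in> sets borel"
      have e2: "emeasure ?P (?R -` A) = c A"
        using e[OF A, of UNIV] Q.emeasure_space_1 sets_eq_imp_space_eq[OF Q(2)] by simp
      have e3: "emeasure ?P (simZ -` B) = emeasure Q B" by (rule induced_Z[OF L Q f0 B])
      show "measure ?P (?R -` A \<inter> simZ -` B \<inter> space ?P) =
          measure ?P (?R -` A \<inter> space ?P) * measure ?P (simZ -` B \<inter> space ?P)"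
        using e[OF A B] e2 e3 b(3) by (simp add: measure_def enn2real_mult)
    qed
  qed
qed

lemma hfun_ret:
  fixes f0 :: "real^'p::finite \<Rightarrow> real" and M0 :: "real^'r::finite^'p"
  assumes f0: "f0 \<in> borel_measurable borel" and f: "f \<in> borel_measurable borel" and A: "A \<in> sets borel"
  shows "hfun f0 M0 (return borel 0) f A z = indicator A (f0 (M0 *v z) - f (M0 *v z))"
proof -
  have p: "(\<lambda>x::real \<times> (real^'p). (x, z)) \<in> borel_measurable borel"
    by (intro borel_measurable_continuous_onI continuous_intros)
  have "(\<lambda>x. (x, z)) -` (gfun f0 M0 f -` A) \<in> sets borel"
  proof -
    have g: "gfun f0 M0 f \<in> borel_measurable borel" by (rule gfun_meas[OF f0 f])
    show ?thesis
      using measurable_sets[OF measurable_compose[OF p g] A] by (simp add: comp_def vimage_def)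
  qed
  then show ?thesis unfolding hfun_def
    by (simp add: indicator_def gfun_def)
qed

definition fz :: "real^'p::finite \<Rightarrow> real" where "fz x = (if x = 0 then 1 else 0)"

definition M0c :: "real^'r::finite^'p::finite" where "M0c = (\<chi> i j. 1)"

lemma fz_meas: "fz \<in> borel_measurable borel"
proof -
  have e: "fz = indicator {0}" by (auto simp: fz_def indicator_def)
  show ?thesis unfolding e by (rule borel_measurable_indicator) simp
qed

lemma M0c_sv: "(M0c :: real^'r::finite^'p::finite) *v sv a \<noteq> 0"
proof -
  have c: "((M0c :: real^'r^'p) *v sv a) $ k = (if snd a then 1 else -1)" for k
    by (simp add: M0c_def matrix_vector_mult_def sv_def axis_def)
  show ?thesis
  proof
    assume "(M0c :: real^'r^'p) *v sv a = 0"
    then have "((M0c :: real^'r^'p) *v sv a) $ undefined = 0" by simp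
    with c show False by (simp split: if_splits)
  qed
qed

lemma Qc_AE: "AE z in (Qc :: (real^'r::finite) measure). fz ((M0c :: real^'r^'p::finite) *v z) = 0"
proof -
  have o: "open {x::real^'r. (M0c :: real^'r^'p) *v x \<noteq> (\<lambda>_. 0) x}"
    by (rule open_Collect_neq) (auto intro: matrix_vector_mult_linear_continuous_on continuous_on_const)
  have "{x \<in> space borel. (M0c :: real^'r^'p) *v x \<noteq> 0} \<in> sets borel"
    using borel_open[OF o] by simp
  then have "(AE z in Qc. (M0c :: real^'r^'p) *v z \<noteq> 0) \<longleftrightarrow> (AE a in measure_pmf (pmf_of_set (UNIV :: ('r \<times> bool) set)). (M0c :: real^'r^'p) *v sv a \<noteq> 0)"
    unfolding Qc_def by (intro AE_distr_iff) simp_all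
  also have "\<dots>" by (simp add: AE_measure_pmf_iff M0c_sv)
  finally show ?thesis by eventually_elim (simp add: fz_def)
qed

lemma Qc_hfun:
  assumes A: "A \<in> sets borel"
  shows "AE z in (Qc :: (real^'r::finite) measure). hfun (\<lambda>_. 0) (M0c :: real^'r^'p::finite) (return borel 0) fz A z = indicator A (0::real)"
  using Qc_AE[where 'p='p] by eventually_elim (simp add: hfun_ret[OF borel_measurable_const fz_meas A])

lemma part3:
  "\<exists>(f0' :: real^'p::finite \<Rightarrow> real) (M0' :: real^'r::finite^'p) (\<Lambda>0' :: (real \<times> (real^'p)) measure)
           (Q0' :: (real^'r) measure set) (Qtr' :: (real^'r) measure) (F' :: (real^'p \<Rightarrow> real) set).
           simdg_setting f0' M0' \<Lambda>0' Q0' Qtr' F' \<and>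
           (\<forall>z. return borel z \<in> Q0') \<and>
           (\<forall>f\<in>F'. \<forall>g\<in>F'. \<forall>P\<in>induced_set f0' M0' \<Lambda>0' Q0'.
              (AE \<omega> in induced f0' M0' \<Lambda>0' Qtr'. f (simX \<omega>) = g (simX \<omega>)) \<longrightarrow>
              (AE \<omega> in P. f (simX \<omega>) = g (simX \<omega>))) \<and>
           \<not> (H1_set f0' M0' \<Lambda>0' Qtr' F' \<subseteq> invariant_set f0' M0' \<Lambda>0' Q0' Qtr' F')"
proof -
  let ?f0 = "\<lambda>_::real^'p. 0::real"
  let ?M0 = "M0c :: real^'r^'p"
  let ?L = "return borel (0 :: real \<times> (real^'p))"
  let ?Q0 = "insert (Qc :: (real^'r) measure) (range (return borel))"
  let ?Qtr = "Qc :: (real^'r) measure"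
  let ?F = "{fz :: real^'p \<Rightarrow> real}"
  have L: "prob_space ?L" "sets ?L = sets borel" by (auto intro: prob_space_return)
  have Qtr: "prob_space ?Qtr" "sets ?Qtr = sets borel" by (rule Qc_basic)+
  have f0: "?f0 \<in> borel_measurable borel" by simp
  have setting: "simdg_setting ?f0 ?M0 ?L ?Q0 ?Qtr ?F"
    unfolding simdg_setting_def
  proof (intro conjI)
    show "integrable ?L (\<lambda>w. w)" by (rule integrable_return') auto
    show "(\<integral>w. w \<partial>?L) = 0" by (subst integral_return) auto
    show "integrable ?L (\<lambda>w. (norm w)\<^sup>2)" by (rule integrable_return') auto
    show "\<forall>Q\<in>?Q0. prob_space Q \<and> sets Q = sets borel" using Qtr by (auto intro: prob_space_return)
    show "\<exists>C. \<forall>P\<in>induced_set ?f0 ?M0 ?L ?Q0.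
          integrable P (\<lambda>\<omega>. (?f0 (simX \<omega>))\<^sup>2) \<and> (\<integral>\<omega>. (?f0 (simX \<omega>))\<^sup>2 \<partial>P) \<le> C"
      by (rule exI[of _ 0]) simp
    show "integrable ?Qtr (\<lambda>z. z)" by (rule Qc_int(1)) simp
    show "(\<integral>z. z \<partial>?Qtr) = 0" by (rule Qc_mean)
    show "\<forall>i j. integrable ?Qtr (\<lambda>z. z $ i * z $ j)" by (intro allI Qc_int(1)) measurable
    show "\<forall>a::real^'r. a \<noteq> 0 \<longrightarrow> a \<bullet> ((\<chi> i j. \<integral>z. z $ i * z $ j \<partial>?Qtr) *v a) > 0"
    proof (intro allI impI)
      fix a :: "real^'r" assume a: "a \<noteq> 0"
      have s: "(\<Sum>j\<in>UNIV. (if i = j then c else 0) * a $ j) = c * a $ i" for i and c :: real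
      proof -
        have "\<And>j. (if i = j then c else 0) * a $ j = (if i = j then c * a $ j else 0)" by simp
        then show ?thesis by simp
      qed
      have "(\<chi> i j. \<integral>z. z $ i * z $ j \<partial>?Qtr) *v a = (1 / real CARD('r)) *\<^sub>R a"
        by (simp add: Qc_cov vec_eq_iff matrix_vector_mult_def s del: sum_mult_indicator)
      then show "a \<bullet> ((\<chi> i j. \<integral>z. z $ i * z $ j \<partial>?Qtr) *v a) > 0"
        using a by simp
    qed
    show "?F \<subseteq> borel_measurable borel" using fz_meas by simp
  qed (use L Qtr in auto)
  have fzH: "fz \<in> H1_set ?f0 ?M0 ?L ?Qtr ?F"
    unfolding H1_set_def
    using indep_from_AE[OF L Qtr f0 fz_meas Qc_hfun] by simp
  have m_ind: "induced ?f0 ?M0 ?L (return borel 0) \<in> induced_set ?f0 ?M0 ?L ?Q0"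
    unfolding induced_set_def by auto
  have ret: "prob_space (return borel (0::real^'r))" "sets (return borel (0::real^'r)) = sets borel"
    by (auto intro: prob_space_return)
  have A: "{-1::real} \<in> sets borel" by simp
  have e1: "emeasure (resid_distr (induced ?f0 ?M0 ?L (return borel 0)) fz) {-1} = 1"
  proof -
    have hm: "hfun ?f0 ?M0 ?L fz {-1} \<in> borel_measurable borel"
      using key(2)[OF L ret f0 fz_meas A, of UNIV] by (simp add: measurable_cong_sets[OF ret(2) refl])
    have "emeasure (resid_distr (induced ?f0 ?M0 ?L (return borel 0)) fz) {-1}
        = (\<integral>\<^sup>+z. hfun ?f0 ?M0 ?L fz {-1} z \<partial>return borel 0)"
      by (rule induced_resid(1)[OF L ret f0 fz_meas A])
    also have "\<dots> = hfun ?f0 ?M0 ?L fz {-1} 0" by (rule nn_integral_return[OF _ hm]) simp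
    also have "\<dots> = 1" by (simp add: hfun_ret[OF f0 fz_meas A] fz_def)
    finally show ?thesis .
  qed
  have e2: "emeasure (resid_distr (induced ?f0 ?M0 ?L ?Qtr) fz) {-1} = 0"
  proof -
    have "emeasure (resid_distr (induced ?f0 ?M0 ?L ?Qtr) fz) {-1}
        = (\<integral>\<^sup>+z. hfun ?f0 ?M0 ?L fz {-1} z \<partial>?Qtr)"
      by (rule induced_resid(1)[OF L Qtr f0 fz_meas A])
    also have "\<dots> = (\<integral>\<^sup>+z. indicator {-1} (0::real) \<partial>?Qtr)"
      by (rule nn_integral_cong_AE[OF Qc_hfun[OF A]])
    also have "\<dots> = 0" by simp
    finally show ?thesis .
  qed
  have "fz \<notin> invariant_set ?f0 ?M0 ?L ?Q0 ?Qtr ?F"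
  proof
    assume "fz \<in> invariant_set ?f0 ?M0 ?L ?Q0 ?Qtr ?F"
    then have "resid_distr (induced ?f0 ?M0 ?L ?Qtr) fz = resid_distr (induced ?f0 ?M0 ?L (return borel 0)) fz"
      using m_ind unfolding invariant_set_def by blast
    then show False using e1 e2 by simp
  qed
  then have "\<not> (H1_set ?f0 ?M0 ?L ?Qtr ?F \<subseteq> invariant_set ?f0 ?M0 ?L ?Q0 ?Qtr ?F)"
    using fzH by blast
  moreover have "\<forall>f\<in>?F. \<forall>g\<in>?F. \<forall>P\<in>induced_set ?f0 ?M0 ?L ?Q0.
              (AE \<omega> in induced ?f0 ?M0 ?L ?Qtr. f (simX \<omega>) = g (simX \<omega>)) \<longrightarrow>
              (AE \<omega> in P. f (simX \<omega>) = g (simX \<omega>))"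
    by simp
  moreover have "\<forall>z. return borel z \<in> ?Q0" by simp
  ultimately show ?thesis using setting by blast
qed


theorem proposition1:
  fixes f0 :: "real^'p::finite \<Rightarrow> real" and M0 :: "real^'r::finite^'p"
    and \<Lambda>0 :: "(real \<times> (real^'p)) measure" and Q0 :: "(real^'r) measure set"
    and Qtr :: "(real^'r) measure" and F :: "(real^'p \<Rightarrow> real) set"
  assumes setting: "simdg_setting f0 M0 \<Lambda>0 Q0 Qtr F"
    and dirac: "\<forall>z. return borel z \<in> Q0"
  shows "(invariant_set f0 M0 \<Lambda>0 Q0 Qtr F \<subseteq> H1_set f0 M0 \<Lambda>0 Qtr F)
    \<and> ((\<forall>P\<in>induced_set f0 M0 \<Lambda>0 Q0. absolutely_continuous (induced f0 M0 \<Lambda>0 Qtr) P)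
         \<longrightarrow> H1_set f0 M0 \<Lambda>0 Qtr F \<subseteq> invariant_set f0 M0 \<Lambda>0 Q0 Qtr F)
    \<and> (\<exists>(f0' :: real^'p \<Rightarrow> real) (M0' :: real^'r^'p) (\<Lambda>0' :: (real \<times> (real^'p)) measure)
           (Q0' :: (real^'r) measure set) (Qtr' :: (real^'r) measure) (F' :: (real^'p \<Rightarrow> real) set).
           simdg_setting f0' M0' \<Lambda>0' Q0' Qtr' F' \<and>
           (\<forall>z. return borel z \<in> Q0') \<and>
           (\<forall>f\<in>F'. \<forall>g\<in>F'. \<forall>P\<in>induced_set f0' M0' \<Lambda>0' Q0'.
              (AE \<omega> in induced f0' M0' \<Lambda>0' Qtr'. f (simX \<omega>) = g (simX \<omega>)) \<longrightarrow>
              (AE \<omega> in P. f (simX \<omega>) = g (simX \<omega>))) \<and>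
           \<not> (H1_set f0' M0' \<Lambda>0' Qtr' F' \<subseteq> invariant_set f0' M0' \<Lambda>0' Q0' Qtr' F'))"
  using part1[OF setting dirac] part2[OF setting] part3 by blast

end
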